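(* Let $(G,u,v,\alpha,\beta)$ be a Guvab with $\lim_{k\to\infty}W_k=0$. If there exists $N\ge0$ such that $\{W_k\}_{k\ge N}$ is a constant sequence, then $\{W_k\}_{k\ge1}$ is a constant sequence.
   Context: A Guvab is a tuple $(G,u,v,\alpha,\beta)$ where $G$ is a finite, connected, simple graph, $u,v\in V(G)$, and $\alpha,\beta\in[0,1]$ with $\alpha\le\beta$. A random walk on $G$ with starting vertex $w$ and laziness $\gamma$ is the Markov chain $R_0=w$ and, for $i\ge1$, $R_i=R_{i-1}$ with probability $\gamma$ and $R_i=t$ with probability $\frac{1-\gamma}{\deg(R_{i-1})}$ for each neighbor $t$ of $R_{i-1}$. $\mu_k$ is the distribution after $k$ steps of the walk from $u$ with laziness $\alpha$, $\nu_k$ that of the walk from $v$ with laziness $\beta$, and $W_k=W(\mu_k,\nu_k)$ is the Wasserstein ($L^1$ optimal transport) distance with respect to the graph distance. *)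

theory Defs
  imports "HOL-Analysis.Analysis"
begin

definition edge_rel :: "('a \<Rightarrow> 'a \<Rightarrow> bool) \<Rightarrow> ('a \<times> 'a) set" where
  "edge_rel E = {(x, y). E x y}"

definition fin_conn_simple_graph :: "'a set \<Rightarrow> ('a \<Rightarrow> 'a \<Rightarrow> bool) \<Rightarrow> bool" where
  "fin_conn_simple_graph V E \<longleftrightarrow>
     finite V \<and> V \<noteq> {} \<and>
     (\<forall>x y. E x y \<longrightarrow> x \<in> V \<and> y \<in> V) \<and>
     (\<forall>x y. E x y \<longrightarrow> E y x) \<and>
     (\<forall>x. \<not> E x x) \<and>
     (\<forall>x\<in>V. \<forall>y\<in>V. (x, y) \<in> (edge_rel E)\<^sup>*)"

definition deg :: "'a set \<Rightarrow> ('a \<Rightarrow> 'a \<Rightarrow> bool) \<Rightarrow> 'a \<Rightarrow> nat" where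
  "deg V E x = card {y \<in> V. E x y}"

definition gdist :: "('a \<Rightarrow> 'a \<Rightarrow> bool) \<Rightarrow> 'a \<Rightarrow> 'a \<Rightarrow> nat" where
  "gdist E x y = (LEAST n. (x, y) \<in> (edge_rel E) ^^ n)"

fun walk_dist :: "'a set \<Rightarrow> ('a \<Rightarrow> 'a \<Rightarrow> bool) \<Rightarrow> real \<Rightarrow> 'a \<Rightarrow> nat \<Rightarrow> 'a \<Rightarrow> real" where
  "walk_dist V E \<gamma> w 0 = (\<lambda>y. if y = w then 1 else 0)"
| "walk_dist V E \<gamma> w (Suc k) = (\<lambda>y.
      \<gamma> * walk_dist V E \<gamma> w k y
      + (\<Sum>x\<in>{x \<in> V. E x y}. walk_dist V E \<gamma> w k x * (1 - \<gamma>) / real (deg V E x)))"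

definition couplings :: "'a set \<Rightarrow> ('a \<Rightarrow> real) \<Rightarrow> ('a \<Rightarrow> real) \<Rightarrow> ('a \<times> 'a \<Rightarrow> real) set" where
  "couplings V \<mu> \<nu> = {\<pi>. (\<forall>p. \<pi> p \<ge> 0) \<and> (\<forall>p. p \<notin> V \<times> V \<longrightarrow> \<pi> p = 0) \<and>
      (\<forall>x\<in>V. (\<Sum>y\<in>V. \<pi> (x, y)) = \<mu> x) \<and>
      (\<forall>y\<in>V. (\<Sum>x\<in>V. \<pi> (x, y)) = \<nu> y)}"

definition wasserstein :: "'a set \<Rightarrow> ('a \<Rightarrow> 'a \<Rightarrow> bool) \<Rightarrow> ('a \<Rightarrow> real) \<Rightarrow> ('a \<Rightarrow> real) \<Rightarrow> real" where
  "wasserstein V E \<mu> \<nu> =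
     (INF \<pi>\<in>couplings V \<mu> \<nu>. \<Sum>p\<in>V \<times> V. \<pi> p * real (gdist E (fst p) (snd p)))"

definition W_seq :: "'a set \<Rightarrow> ('a \<Rightarrow> 'a \<Rightarrow> bool) \<Rightarrow> 'a \<Rightarrow> 'a \<Rightarrow> real \<Rightarrow> real \<Rightarrow> nat \<Rightarrow> real" where
  "W_seq V E u v \<alpha> \<beta> k = wasserstein V E (walk_dist V E \<alpha> u k) (walk_dist V E \<beta> v k)"

end

theory Submission
  imports Defs "HOL-Library.Function_Algebras"
begin



definition sc :: "real \<Rightarrow> ('b \<Rightarrow> real) \<Rightarrow> ('b \<Rightarrow> real)" where "sc c f = (\<lambda>x. c * f x)"
interpretation fv: vector_space sc
  by unfold_locales (auto simp: sc_def algebra_simps)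

lemma funpow_apply_add: "(f^^j) ((f^^i) x) = (f^^(i+j)) x"
  by (metis add.commute comp_apply funpow_add)

lemma sum_fun_apply: "(sum f A) x = (\<Sum>i\<in>A. f i x)"
  by (induction A rule: infinite_finite_induct) auto

lemma span_supp:
  assumes "finite S" "\<forall>x. x \<notin> S \<longrightarrow> f x = 0"
  shows "f \<in> fv.span ((\<lambda>s x. if x = s then 1 else 0) ` S)"
proof -
  have "f = (\<Sum>s\<in>S. sc (f s) (\<lambda>x. if x = s then 1 else 0))"
  proof
    fix x show "f x = (\<Sum>s\<in>S. sc (f s) (\<lambda>x. if x = s then 1 else 0)) x"
      using assms by (auto simp: sum_fun_apply sc_def if_distrib cong: if_cong)
  qed
  also have "\<dots> \<in> fv.span ((\<lambda>s x. if x = s then 1 else 0) ` S)"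
    by (intro fv.span_sum fv.span_scale fv.span_base) auto
  finally show ?thesis .
qed

locale linop =
  fixes M :: "('b \<Rightarrow> real) \<Rightarrow> ('b \<Rightarrow> real)" and S :: "'b set"
  assumes fin: "finite S"
    and Madd: "\<And>f g. M (f + g) = M f + M g"
    and Msc: "\<And>c f. M (sc c f) = sc c (M f)"
    and Msupp: "\<And>f. \<forall>x. x \<notin> S \<longrightarrow> f x = 0 \<Longrightarrow> \<forall>x. x \<notin> S \<longrightarrow> M f x = 0"
    and Mker: "\<And>f. \<forall>x. x \<notin> S \<longrightarrow> f x = 0 \<Longrightarrow> M (M f) = 0 \<Longrightarrow> M f = 0"
begin

lemma M0: "M 0 = 0"
proof -
  have "M (sc 0 0) = sc 0 (M 0)" by (rule Msc)
  moreover have "sc 0 (0::'b\<Rightarrow>real) = 0" "sc 0 (M 0) = 0" by (auto simp: sc_def)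
  ultimately show ?thesis by simp
qed

lemma Mdiff: "M (f - g) = M f - M g"
proof -
  have "f - g = f + sc (-1) g" by (auto simp: sc_def)
  hence "M (f - g) = M f + sc (-1) (M g)" by (simp only: Madd Msc)
  also have "M f + sc (-1) (M g) = M f - M g" by (rule ext) (simp add: sc_def)
  finally show ?thesis .
qed

lemma Msum: "M (\<Sum>i\<in>A. sc (c i) (f i)) = (\<Sum>i\<in>A. sc (c i) (M (f i)))"
proof (induction A rule: infinite_finite_induct)
  case (infinite A) then show ?case by (simp only: sum.infinite M0 not_False_eq_True)
next
  case empty then show ?case by (simp only: sum.empty M0)
next
  case (insert x F) then show ?case by (simp only: sum.insert Madd Msc not_False_eq_True simp_thms)
qed

lemma Mnsum: "(M^^n) (\<Sum>i\<in>A. sc (c i) (f i)) = (\<Sum>i\<in>A. sc (c i) ((M^^n) (f i)))"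
  by (induction n) (auto simp: Msum)

lemma Mnsupp: "\<forall>x. x \<notin> S \<longrightarrow> f x = 0 \<Longrightarrow> \<forall>x. x \<notin> S \<longrightarrow> (M^^n) f x = 0"
  by (induction n) (auto dest: Msupp)

lemma indep_chain:
  fixes K :: "nat \<Rightarrow> 'b \<Rightarrow> real"
  shows "(\<forall>d<m. K d \<notin> fv.span (K ` {..<d})) \<longrightarrow> fv.independent (K ` {..<m}) \<and> card (K ` {..<m}) = m"
proof (induction m)
  case 0 then show ?case by (auto simp: fv.independent_empty)
next
  case (Suc m)
  show ?case
  proof
    assume h: "\<forall>d<Suc m. K d \<notin> fv.span (K ` {..<d})"
    have hm: "\<forall>d<m. K d \<notin> fv.span (K ` {..<d})" using h less_SucI by blast
    have IH: "fv.independent (K ` {..<m}) \<and> card (K ` {..<m}) = m" using Suc.IH hm by (rule mp)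
    have nm: "K m \<notin> fv.span (K ` {..<m})" using h lessI by blast
    have nm2: "K m \<notin> K ` {..<m}" using nm fv.span_base[of "K m" "K ` {..<m}"] by blast
    have eq: "K ` {..<Suc m} = insert (K m) (K ` {..<m})" by (simp only: lessThan_Suc image_insert)
    show "fv.independent (K ` {..<Suc m}) \<and> card (K ` {..<Suc m}) = Suc m"
    proof
      show "fv.independent (K ` {..<Suc m})" unfolding eq
        by (rule fv.independent_insertI[OF nm conjunct1[OF IH]])
      have "card (insert (K m) (K ` {..<m})) = Suc (card (K ` {..<m}))"
        using nm2 by (simp add: card_insert_disjoint)
      thus "card (K ` {..<Suc m}) = Suc m" unfolding eq using IH by simp
    qed
  qed
qed

lemma krylov:
  assumes zs: "\<forall>x. x \<notin> S \<longrightarrow> z x = 0"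
  shows "\<exists>d c. (d = 0 \<or> c 0 \<noteq> 0) \<and>
     (\<forall>j. (M^^(j+d)) (M z) = (\<Sum>i<d. sc (c i) ((M^^(i+j)) (M z))))"
proof -
  define K where "K j = (M^^j) (M z)" for j
  have Ksupp: "\<forall>x. x \<notin> S \<longrightarrow> K j x = 0" for j
    unfolding K_def by (rule Mnsupp) (use Msupp[OF zs] in auto)
  define B where "B = (\<lambda>s x. if x = s then (1::real) else 0) ` S"
  have ex: "\<exists>d. K d \<in> fv.span (K ` {..<d})"
  proof (rule ccontr)
    assume "\<not> ?thesis"
    hence h: "\<forall>d<Suc (card S). K d \<notin> fv.span (K ` {..<d})" by blast
    have I: "fv.independent (K ` {..<Suc (card S)}) \<and> card (K ` {..<Suc (card S)}) = Suc (card S)"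
      using indep_chain[of "Suc (card S)" K] h by blast
    have sub: "K ` {..<Suc (card S)} \<subseteq> fv.span B"
    proof
      fix f assume "f \<in> K ` {..<Suc (card S)}"
      then obtain j where "f = K j" by blast
      thus "f \<in> fv.span B" using span_supp[OF fin Ksupp[of j]] unfolding B_def by simp
    qed
    have fB: "finite B" unfolding B_def using fin by simp
    have cB: "card B \<le> card S" unfolding B_def by (rule card_image_le[OF fin])
    from fv.independent_span_bound[OF fB conjunct1[OF I] sub]
    have "card (K ` {..<Suc (card S)}) \<le> card B" by blast
    thus False using I cB by simp
  qed
  define d where "d = (LEAST d. K d \<in> fv.span (K ` {..<d}))"
  have dspan: "K d \<in> fv.span (K ` {..<d})" unfolding d_def by (rule LeastI_ex[OF ex])
  have dmin: "K e \<notin> fv.span (K ` {..<e})" if "e < d" for e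
    using that unfolding d_def by (rule not_less_Least)
  have inj: "inj_on K {..<d}"
  proof (rule inj_onI)
    fix i j assume ij: "i \<in> {..<d}" "j \<in> {..<d}" "K i = K j"
    show "i = j"
    proof (rule ccontr)
      assume "i \<noteq> j"
      then consider "i < j" | "j < i" by linarith
      thus False
      proof cases
        case 1 hence "K j \<in> fv.span (K ` {..<j})" using ij by (metis fv.span_base image_eqI lessThan_iff)
        thus False using dmin ij by auto
      next
        case 2 hence "K i \<in> fv.span (K ` {..<i})" using ij by (metis fv.span_base image_eqI lessThan_iff)
        thus False using dmin[of i] ij(1) by blast
      qed
    qed
  qed
  have fin': "finite (K ` {..<d})" by simp
  have "K d \<in> range (\<lambda>u. \<Sum>v\<in>K ` {..<d}. sc (u v) v)"
    using dspan unfolding fv.span_finite[OF fin'] .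
  then obtain u where "K d = (\<Sum>v\<in>K ` {..<d}. sc (u v) v)" by (rule rangeE)
  also have "\<dots> = (\<Sum>i<d. sc (u (K i)) (K i))"
    by (simp only: sum.reindex[OF inj] comp_def)
  finally have rep: "K d = (\<Sum>i<d. sc (u (K i)) (K i))" .
  define c where "c i = u (K i)" for i
  have rec: "\<forall>j. K (j+d) = (\<Sum>i<d. sc (c i) (K (i+j)))"
  proof
    fix j
    have "K (j+d) = (M^^j) (K d)" unfolding K_def by (simp add: funpow_add)
    also have "\<dots> = (\<Sum>i<d. sc (c i) ((M^^j) (K i)))" unfolding rep c_def by (rule Mnsum)
    also have "\<dots> = (\<Sum>i<d. sc (c i) (K (i+j)))" unfolding K_def by (simp only: funpow_apply_add)
    finally show "K (j+d) = (\<Sum>i<d. sc (c i) (K (i+j)))" .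
  qed
  have c0: "d = 0 \<or> c 0 \<noteq> 0"
  proof (rule ccontr)
    assume "\<not> ?thesis"
    then obtain d' where dd: "d = Suc d'" and cz: "c 0 = 0" by (cases d) auto
    define y where "y = K d' - (\<Sum>i<d'. sc (c (Suc i)) (K i))"
    define z' where "z' = (M^^d') z - (\<Sum>i<d'. sc (c (Suc i)) ((M^^i) z))"
    have KM: "K j = M ((M^^j) z)" for j unfolding K_def by (rule funpow_swap1[symmetric])
    have KS: "M (K j) = K (Suc j)" for j unfolding K_def by simp
    have yz: "y = M z'" unfolding y_def z'_def by (simp only: Mdiff Msum KM)
    have "M y = K d - (\<Sum>i<d'. sc (c (Suc i)) (K (Suc i)))"
      by (simp only: y_def Mdiff Msum KS dd)
    also have "\<dots> = 0"
    proof -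
      have "K d = (\<Sum>i<Suc d'. sc (c i) (K i))" using rep unfolding dd by (simp only: c_def)
      also have "\<dots> = sc (c 0) (K 0) + (\<Sum>i<d'. sc (c (Suc i)) (K (Suc i)))"
        by (simp only: sum.lessThan_Suc_shift)
      also have "sc (c 0) (K 0) = 0" using cz by (simp add: sc_def fun_eq_iff)
      finally show ?thesis by simp
    qed
    finally have My: "M y = 0" .
    have z's: "\<forall>x. x \<notin> S \<longrightarrow> z' x = 0"
    proof (intro allI impI)
      fix x assume "x \<notin> S"
      hence h0: "(M^^n) z x = 0" for n using Mnsupp[OF zs] by blast
      have "z' x = (M^^d') z x - (\<Sum>i<d'. c (Suc i) * (M^^i) z x)"
        unfolding z'_def by (simp only: minus_apply sum_fun_apply sc_def)
      thus "z' x = 0" by (simp add: h0)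
    qed
    have "y = 0" using Mker[OF z's] My yz by simp
    hence "K d' - (\<Sum>i<d'. sc (c (Suc i)) (K i)) = 0" by (simp only: y_def)
    hence "K d' = (\<Sum>i<d'. sc (c (Suc i)) (K i))" by (simp only: right_minus_eq)
    also have "\<dots> \<in> fv.span (K ` {..<d'})"
      by (intro fv.span_sum fv.span_scale fv.span_base) auto
    finally show False using dmin[of d'] dd by auto
  qed
  show ?thesis using rec c0 unfolding K_def by blast
qed

end

lemma backward:
  fixes g :: "nat \<Rightarrow> real"
  assumes rec: "\<forall>j. g (j+d) = (\<Sum>i<d. c i * g (i+j))"
    and c0: "d = 0 \<or> c 0 \<noteq> 0"
  shows "(\<forall>j\<ge>K. g j = 0) \<Longrightarrow> g j = 0"
proof (induction K arbitrary: j)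
  case 0 then show ?case by auto
next
  case (Suc K)
  have "g K = 0"
  proof (cases d)
    case 0 then show ?thesis using rec[rule_format, of K] by simp
  next
    case (Suc d')
    have "0 = g (K + d)" using Suc.prems Suc by simp
    also have "\<dots> = (\<Sum>i<d. c i * g (i+K))" using rec by blast
    also have "\<dots> = c 0 * g K + (\<Sum>i<d'. c (Suc i) * g (Suc i + K))"
      unfolding Suc sum.lessThan_Suc_shift by simp
    also have "(\<Sum>i<d'. c (Suc i) * g (Suc i + K)) = 0"
      using Suc.prems by (intro sum.neutral) auto
    finally show ?thesis using c0 Suc by simp
  qed
  hence "\<forall>j\<ge>K. g j = 0" using Suc.prems by (metis le_eq_less_or_eq Suc_le_eq)
  thus ?case using Suc.IH by blast
qed




definition rho :: "'a set \<Rightarrow> ('a \<Rightarrow> 'a \<Rightarrow> bool) \<Rightarrow> 'a \<Rightarrow> real" where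
  "rho V E x = (if deg V E x = 0 then 1 else 1 / real (deg V E x))"

definition step :: "'a set \<Rightarrow> ('a \<Rightarrow> 'a \<Rightarrow> bool) \<Rightarrow> real \<Rightarrow> ('a \<Rightarrow> real) \<Rightarrow> 'a \<Rightarrow> real" where
  "step V E \<gamma> f = (\<lambda>y. \<gamma> * f y + (\<Sum>x\<in>{x \<in> V. E x y}. f x * (1 - \<gamma>) / real (deg V E x)))"

definition cross :: "'a set \<Rightarrow> ('a \<Rightarrow> 'a \<Rightarrow> bool) \<Rightarrow> ('a \<Rightarrow> real) \<Rightarrow> ('a \<Rightarrow> real) \<Rightarrow> real" where
  "cross V E f g = (\<Sum>y\<in>V. \<Sum>x\<in>V. if E x y then f x * g y * rho V E x * rho V E y else 0)"

lemma walk_Suc: "walk_dist V E \<gamma> w (Suc k) = step V E \<gamma> (walk_dist V E \<gamma> w k)"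
  by (simp add: step_def)

lemma G_facts:
  assumes "fin_conn_simple_graph V E"
  shows "finite V" "E x y \<Longrightarrow> x \<in> V" "E x y \<Longrightarrow> y \<in> V" "E x y \<Longrightarrow> E y x" "\<not> E x x"
  using assms unfolding fin_conn_simple_graph_def by blast+

lemma deg_pos:
  assumes G: "fin_conn_simple_graph V E" and "E x y"
  shows "deg V E x > 0"
proof -
  have "y \<in> {z \<in> V. E x z}" using G_facts[OF G] assms(2) by blast
  moreover have "finite {z \<in> V. E x z}" using G_facts(1)[OF G] by simp
  ultimately show ?thesis unfolding deg_def by (metis card_gt_0_iff empty_iff)
qed

lemma rho_pos: "rho V E x > 0"
  unfolding rho_def by auto

lemma rho_deg:
  assumes G: "fin_conn_simple_graph V E" and "E x y"
  shows "rho V E x = 1 / real (deg V E x)"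
  using deg_pos[OF assms] unfolding rho_def by simp

lemma cross_lemma:
  assumes G: "fin_conn_simple_graph V E"
  shows "(\<Sum>y\<in>V. (\<Sum>x\<in>{x \<in> V. E x y}. f x * c / real (deg V E x)) * g y * rho V E y) = c * cross V E f g"
proof -
  have fin: "finite V" using G_facts(1)[OF G] .
  have "(\<Sum>x\<in>{x \<in> V. E x y}. f x * c / real (deg V E x)) * g y * rho V E y
      = c * (\<Sum>x\<in>V. if E x y then f x * g y * rho V E x * rho V E y else 0)" if "y \<in> V" for y
  proof -
    have "(\<Sum>x\<in>{x \<in> V. E x y}. f x * c / real (deg V E x)) * g y * rho V E y
        = (\<Sum>x\<in>{x \<in> V. E x y}. c * (f x * g y * rho V E x * rho V E y))"
      unfolding sum_distrib_right
      by (rule sum.cong) (auto simp: rho_deg[OF G])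
    also have "\<dots> = c * (\<Sum>x\<in>{x \<in> V. E x y}. f x * g y * rho V E x * rho V E y)"
      by (simp add: sum_distrib_left)
    also have "(\<Sum>x\<in>{x \<in> V. E x y}. f x * g y * rho V E x * rho V E y)
        = (\<Sum>x\<in>V. if E x y then f x * g y * rho V E x * rho V E y else 0)"
      using fin by (rule sum.inter_filter)
    finally show ?thesis .
  qed
  hence "(\<Sum>y\<in>V. (\<Sum>x\<in>{x \<in> V. E x y}. f x * c / real (deg V E x)) * g y * rho V E y)
     = (\<Sum>y\<in>V. c * (\<Sum>x\<in>V. if E x y then f x * g y * rho V E x * rho V E y else 0))"
    by (rule sum.cong[OF refl])
  also have "\<dots> = c * cross V E f g" unfolding cross_def by (simp add: sum_distrib_left)
  finally show ?thesis .
qed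

lemma cross_sym:
  assumes G: "fin_conn_simple_graph V E"
  shows "cross V E f g = cross V E g f"
proof -
  have "cross V E f g = (\<Sum>x\<in>V. \<Sum>y\<in>V. if E x y then f x * g y * rho V E x * rho V E y else 0)"
    unfolding cross_def by (rule sum.swap)
  also have "\<dots> = cross V E g f" unfolding cross_def
    by (intro sum.cong refl) (auto simp: G_facts(4)[OF G] mult_ac)
  finally show ?thesis .
qed

lemma step_selfadj:
  assumes G: "fin_conn_simple_graph V E"
  shows "(\<Sum>y\<in>V. step V E \<gamma> f y * g y * rho V E y) = (\<Sum>y\<in>V. f y * step V E \<gamma> g y * rho V E y)"
proof -
  have "(\<Sum>y\<in>V. step V E \<gamma> f y * g y * rho V E y)
     = (\<Sum>y\<in>V. \<gamma> * (f y * g y * rho V E y)) +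
       (\<Sum>y\<in>V. (\<Sum>x\<in>{x \<in> V. E x y}. f x * (1 - \<gamma>) / real (deg V E x)) * g y * rho V E y)"
    unfolding step_def sum.distrib[symmetric] by (intro sum.cong refl) (simp add: algebra_simps)
  also have "\<dots> = (\<Sum>y\<in>V. \<gamma> * (f y * g y * rho V E y)) + (1 - \<gamma>) * cross V E f g"
    by (simp only: cross_lemma[OF G])
  finally have L: "(\<Sum>y\<in>V. step V E \<gamma> f y * g y * rho V E y) =
     (\<Sum>y\<in>V. \<gamma> * (f y * g y * rho V E y)) + (1 - \<gamma>) * cross V E f g" .
  have "(\<Sum>y\<in>V. f y * step V E \<gamma> g y * rho V E y)
     = (\<Sum>y\<in>V. \<gamma> * (f y * g y * rho V E y)) +
       (\<Sum>y\<in>V. (\<Sum>x\<in>{x \<in> V. E x y}. g x * (1 - \<gamma>) / real (deg V E x)) * f y * rho V E y)"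
    unfolding step_def sum.distrib[symmetric] by (intro sum.cong refl) (simp add: algebra_simps)
  also have "\<dots> = (\<Sum>y\<in>V. \<gamma> * (f y * g y * rho V E y)) + (1 - \<gamma>) * cross V E g f"
    by (simp only: cross_lemma[OF G])
  finally have R: "(\<Sum>y\<in>V. f y * step V E \<gamma> g y * rho V E y) =
     (\<Sum>y\<in>V. \<gamma> * (f y * g y * rho V E y)) + (1 - \<gamma>) * cross V E g f" .
  show ?thesis using L R cross_sym[OF G] by simp
qed

lemma step_out:
  assumes G: "fin_conn_simple_graph V E" and "y \<notin> V"
  shows "step V E \<gamma> f y = \<gamma> * f y"
proof -
  have e: "{x \<in> V. E x y} = {}" using G_facts(3)[OF G] assms(2) by blast
  show ?thesis unfolding step_def e sum.empty by simp
qed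

lemma step_ker:
  assumes G: "fin_conn_simple_graph V E"
    and fs: "\<forall>y. y \<notin> V \<longrightarrow> f y = 0"
    and h0: "\<forall>y\<in>V. step V E \<gamma> (step V E \<gamma> f) y = 0"
  shows "step V E \<gamma> f y = 0"
proof (cases "y \<in> V")
  case False thus ?thesis using step_out[OF G False] fs by simp
next
  case True
  define h where "h = step V E \<gamma> f"
  have "(\<Sum>y\<in>V. h y * h y * rho V E y) = (\<Sum>y\<in>V. f y * step V E \<gamma> h y * rho V E y)"
    unfolding h_def by (rule step_selfadj[OF G])
  also have "\<dots> = 0" using h0 unfolding h_def by simp
  finally have s0: "(\<Sum>y\<in>V. h y * h y * rho V E y) = 0" .
  have nn: "0 \<le> h x * h x * rho V E x" if "x \<in> V" for x
    using rho_pos[of V E x] zero_le_square[of "h x"] by (metis mult_nonneg_nonneg less_imp_le)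
  have all: "\<forall>x\<in>V. h x * h x * rho V E x = 0"
    using sum_nonneg_eq_0_iff[OF G_facts(1)[OF G], of "\<lambda>x. h x * h x * rho V E x"] nn s0 by blast
  have "h y * h y * rho V E y = 0" using all True by blast
  thus ?thesis using rho_pos[of V E y] unfolding h_def by simp
qed




definition Mop :: "'a set \<Rightarrow> ('a \<Rightarrow> 'a \<Rightarrow> bool) \<Rightarrow> real \<Rightarrow> real \<Rightarrow> (bool \<times> 'a \<Rightarrow> real) \<Rightarrow> (bool \<times> 'a \<Rightarrow> real)" where
  "Mop V E \<alpha> \<beta> F = (\<lambda>p. step V E (if fst p then \<alpha> else \<beta>) (\<lambda>x. F (fst p, x)) (snd p))"

lemma sum_split_aux:
  fixes f g d :: "'a \<Rightarrow> real"
  shows "(\<Sum>x\<in>A. (f x + g x) * c / d x) = (\<Sum>x\<in>A. f x * c / d x) + (\<Sum>x\<in>A. g x * c / d x)"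
  by (simp add: distrib_right add_divide_distrib sum.distrib)

lemma sum_scale_aux:
  fixes f d :: "'a \<Rightarrow> real"
  shows "(\<Sum>x\<in>A. (a * f x) * c / d x) = a * (\<Sum>x\<in>A. f x * c / d x)"
  by (simp add: sum_distrib_left mult.assoc)

lemma step_add: "step V E \<gamma> (\<lambda>x. f x + g x) y = step V E \<gamma> f y + step V E \<gamma> g y"
  unfolding step_def sum_split_aux by (simp add: distrib_left)

lemma step_scale: "step V E \<gamma> (\<lambda>x. a * f x) y = a * step V E \<gamma> f y"
  unfolding step_def sum_scale_aux by (simp add: distrib_left)

lemma Mop_linop:
  assumes G: "fin_conn_simple_graph V E"
  shows "linop (Mop V E \<alpha> \<beta>) ((UNIV::bool set) \<times> V)"
proof
  show "finite ((UNIV::bool set) \<times> V)" using G_facts(1)[OF G] by simp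
next
  fix F H :: "bool \<times> 'a \<Rightarrow> real"
  show "Mop V E \<alpha> \<beta> (F + H) = Mop V E \<alpha> \<beta> F + Mop V E \<alpha> \<beta> H"
    by (rule ext) (simp add: Mop_def step_add)
next
  fix c and F :: "bool \<times> 'a \<Rightarrow> real"
  show "Mop V E \<alpha> \<beta> (sc c F) = sc c (Mop V E \<alpha> \<beta> F)"
    by (rule ext) (simp add: Mop_def sc_def step_scale)
next
  fix F :: "bool \<times> 'a \<Rightarrow> real"
  assume Fs: "\<forall>x. x \<notin> UNIV \<times> V \<longrightarrow> F x = 0"
  show "\<forall>x. x \<notin> UNIV \<times> V \<longrightarrow> Mop V E \<alpha> \<beta> F x = 0"
  proof (intro allI impI)
    fix p :: "bool \<times> 'a" assume p: "p \<notin> UNIV \<times> V"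
    hence "snd p \<notin> V" by (cases p) auto
    moreover have "F p = 0" using Fs p by blast
    hence "F (fst p, snd p) = 0" by simp
    ultimately show "Mop V E \<alpha> \<beta> F p = 0" unfolding Mop_def by (simp add: step_out[OF G])
  qed
next
  fix F :: "bool \<times> 'a \<Rightarrow> real"
  assume Fs: "\<forall>x. x \<notin> UNIV \<times> V \<longrightarrow> F x = 0"
    and MM: "Mop V E \<alpha> \<beta> (Mop V E \<alpha> \<beta> F) = 0"
  show "Mop V E \<alpha> \<beta> F = 0"
  proof (rule ext)
    fix p :: "bool \<times> 'a"
    obtain b y where p: "p = (b, y)" by (cases p)
    define \<gamma> where "\<gamma> = (if b then \<alpha> else \<beta>)"
    have fs: "\<forall>y. y \<notin> V \<longrightarrow> F (b, y) = 0" using Fs by auto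
    have h0: "\<forall>y\<in>V. step V E \<gamma> (step V E \<gamma> (\<lambda>x. F (b, x))) y = 0"
    proof
      fix y assume "y \<in> V"
      have "Mop V E \<alpha> \<beta> (Mop V E \<alpha> \<beta> F) (b, y) = 0" using MM by simp
      thus "step V E \<gamma> (step V E \<gamma> (\<lambda>x. F (b, x))) y = 0"
        unfolding Mop_def \<gamma>_def by simp
    qed
    have "step V E \<gamma> (\<lambda>x. F (b, x)) y = 0"
      by (rule step_ker[OF G]) (use fs h0 in auto)
    thus "Mop V E \<alpha> \<beta> F p = 0 p" unfolding Mop_def p \<gamma>_def by simp
  qed
qed

lemma Mop_walk:
  "(Mop V E \<alpha> \<beta> ^^ k) (\<lambda>p. if snd p = (if fst p then u else v) then 1 else 0)
   = (\<lambda>p. walk_dist V E (if fst p then \<alpha> else \<beta>) (if fst p then u else v) k (snd p))"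
proof (induction k)
  case 0 show ?case by (rule ext) simp
next
  case (Suc k)
  have "(Mop V E \<alpha> \<beta> ^^ Suc k) (\<lambda>p. if snd p = (if fst p then u else v) then 1 else 0)
    = Mop V E \<alpha> \<beta> ((Mop V E \<alpha> \<beta> ^^ k) (\<lambda>p. if snd p = (if fst p then u else v) then 1 else 0))"
    by simp
  also have "\<dots> = Mop V E \<alpha> \<beta> (\<lambda>p. walk_dist V E (if fst p then \<alpha> else \<beta>) (if fst p then u else v) k (snd p))"
    by (simp only: Suc)
  also have "\<dots> = (\<lambda>p. walk_dist V E (if fst p then \<alpha> else \<beta>) (if fst p then u else v) (Suc k) (snd p))"
  proof (rule ext)
    fix p :: "bool \<times> 'a"
    show "Mop V E \<alpha> \<beta> (\<lambda>p. walk_dist V E (if fst p then \<alpha> else \<beta>) (if fst p then u else v) k (snd p)) p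
      = walk_dist V E (if fst p then \<alpha> else \<beta>) (if fst p then u else v) (Suc k) (snd p)"
      unfolding Mop_def walk_Suc by (cases "fst p") simp_all
  qed
  finally show ?case .
qed

lemma walk_nonneg:
  assumes "0 \<le> \<gamma>" "\<gamma> \<le> 1"
  shows "0 \<le> walk_dist V E \<gamma> w k y"
  using assms
  by (induction k arbitrary: y) (auto intro!: add_nonneg_nonneg mult_nonneg_nonneg sum_nonneg divide_nonneg_nonneg)

lemma walk_out:
  assumes G: "fin_conn_simple_graph V E" and "w \<in> V" "y \<notin> V"
  shows "walk_dist V E \<gamma> w k y = 0"
  using assms(3)
proof (induction k arbitrary: y)
  case 0 then show ?case using assms(2) by auto
next
  case (Suc k)
  show ?case unfolding walk_Suc step_out[OF G Suc.prems] using Suc by simp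
qed

lemma step_mass:
  assumes G: "fin_conn_simple_graph V E" and dp: "\<forall>x\<in>V. deg V E x > 0"
  shows "(\<Sum>y\<in>V. step V E \<gamma> f y) = (\<Sum>y\<in>V. f y)"
proof -
  have fin: "finite V" using G_facts(1)[OF G] .
  define a where "a x = f x * (1 - \<gamma>) / real (deg V E x)" for x
  have "(\<Sum>y\<in>V. \<Sum>x\<in>{x \<in> V. E x y}. a x) = (\<Sum>y\<in>V. \<Sum>x\<in>V. if E x y then a x else 0)"
    by (intro sum.cong refl sum.inter_filter fin)
  also have "\<dots> = (\<Sum>x\<in>V. \<Sum>y\<in>V. if E x y then a x else 0)" by (rule sum.swap)
  also have "\<dots> = (\<Sum>x\<in>V. \<Sum>y\<in>{y \<in> V. E x y}. a x)"
    by (intro sum.cong refl sum.inter_filter[symmetric] fin)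
  also have "\<dots> = (\<Sum>x\<in>V. a x * real (deg V E x))" unfolding deg_def by (simp add: mult.commute)
  also have "\<dots> = (\<Sum>x\<in>V. (1 - \<gamma>) * f x)"
    using dp unfolding a_def by (intro sum.cong refl) auto
  finally have X: "(\<Sum>y\<in>V. \<Sum>x\<in>{x \<in> V. E x y}. a x) = (1 - \<gamma>) * (\<Sum>x\<in>V. f x)"
    by (simp add: sum_distrib_left)
  have "(\<Sum>y\<in>V. step V E \<gamma> f y) = \<gamma> * (\<Sum>y\<in>V. f y) + (\<Sum>y\<in>V. \<Sum>x\<in>{x \<in> V. E x y}. a x)"
    unfolding step_def a_def by (simp add: sum.distrib sum_distrib_left)
  also have "\<dots> = (\<Sum>y\<in>V. f y)" unfolding X by (simp add: algebra_simps)
  finally show ?thesis .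
qed

lemma walk_mass:
  assumes G: "fin_conn_simple_graph V E" and dp: "\<forall>x\<in>V. deg V E x > 0" and w: "w \<in> V"
  shows "(\<Sum>y\<in>V. walk_dist V E \<gamma> w k y) = 1"
proof (induction k)
  case 0 show ?case using w G_facts(1)[OF G] by simp
next
  case (Suc k) show ?case unfolding walk_Suc step_mass[OF G dp] by (rule Suc)
qed

lemma gdist_self: "gdist E x x = 0"
  unfolding gdist_def by (rule Least_eq_0) simp

lemma gdist_ge1:
  assumes G: "fin_conn_simple_graph V E" and "x \<in> V" "y \<in> V" "x \<noteq> y"
  shows "1 \<le> gdist E x y"
proof -
  have "(x, y) \<in> (edge_rel E)\<^sup>*" using G assms unfolding fin_conn_simple_graph_def by blast
  then obtain n where "(x, y) \<in> edge_rel E ^^ n" using rtrancl_power by blast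
  hence "(x, y) \<in> edge_rel E ^^ gdist E x y" unfolding gdist_def by (rule LeastI)
  moreover have "gdist E x y \<noteq> 0"
  proof
    assume "gdist E x y = 0"
    with \<open>(x, y) \<in> edge_rel E ^^ gdist E x y\<close> have "x = y" by simp
    with assms(4) show False ..
  qed
  ultimately show ?thesis by simp
qed




lemma cost_lb:
  assumes G: "fin_conn_simple_graph V E" and pi: "\<pi> \<in> couplings V \<mu> \<nu>" and x: "x \<in> V"
  shows "\<bar>\<mu> x - \<nu> x\<bar> \<le> (\<Sum>p\<in>V \<times> V. \<pi> p * real (gdist E (fst p) (snd p)))"
proof -
  have fin: "finite V" using G_facts(1)[OF G] .
  have nn: "\<And>p. 0 \<le> \<pi> p" using pi unfolding couplings_def by blast
  have row: "\<And>a. a \<in> V \<Longrightarrow> (\<Sum>b\<in>V. \<pi> (a, b)) = \<mu> a" using pi unfolding couplings_def by blast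
  have col: "\<And>b. b \<in> V \<Longrightarrow> (\<Sum>a\<in>V. \<pi> (a, b)) = \<nu> b" using pi unfolding couplings_def by blast
  define g where "g a b = \<pi> (a, b) * real (gdist E a b)" for a b
  have gnn: "0 \<le> g a b" for a b unfolding g_def using nn by simp
  have cost: "(\<Sum>p\<in>V \<times> V. \<pi> p * real (gdist E (fst p) (snd p))) = (\<Sum>a\<in>V. \<Sum>b\<in>V. g a b)"
    unfolding g_def by (simp add: sum.cartesian_product case_prod_beta)
  have le1: "\<pi> (a, b) \<le> g a b" if "a \<in> V" "b \<in> V" "a \<noteq> b" for a b
  proof -
    have "1 \<le> real (gdist E a b)" using gdist_ge1[OF G that] by simp
    hence "\<pi> (a, b) * 1 \<le> \<pi> (a, b) * real (gdist E a b)" using nn by (intro mult_left_mono) auto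
    thus ?thesis unfolding g_def by simp
  qed
  define A where "A = (\<Sum>b\<in>V - {x}. \<pi> (x, b))"
  define B where "B = (\<Sum>a\<in>V - {x}. \<pi> (a, x))"
  have A0: "0 \<le> A" unfolding A_def using nn by (simp add: sum_nonneg)
  have B0: "0 \<le> B" unfolding B_def using nn by (simp add: sum_nonneg)
  have "A \<le> (\<Sum>b\<in>V - {x}. g x b)" unfolding A_def using le1 x by (intro sum_mono) auto
  also have "\<dots> \<le> (\<Sum>b\<in>V. g x b)" using fin gnn by (intro sum_mono2) auto
  also have "\<dots> \<le> (\<Sum>a\<in>V. \<Sum>b\<in>V. g a b)"
    using fin x gnn by (intro member_le_sum sum_nonneg) auto
  finally have Ac: "A \<le> (\<Sum>a\<in>V. \<Sum>b\<in>V. g a b)" .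
  have "B \<le> (\<Sum>a\<in>V - {x}. g a x)" unfolding B_def using le1 x by (intro sum_mono) auto
  also have "\<dots> \<le> (\<Sum>a\<in>V. g a x)" using fin gnn by (intro sum_mono2) auto
  also have "\<dots> \<le> (\<Sum>b\<in>V. \<Sum>a\<in>V. g a b)"
    using fin x gnn by (intro member_le_sum sum_nonneg) auto
  also have "\<dots> = (\<Sum>a\<in>V. \<Sum>b\<in>V. g a b)" by (rule sum.swap)
  finally have Bc: "B \<le> (\<Sum>a\<in>V. \<Sum>b\<in>V. g a b)" .
  have mu: "\<mu> x = \<pi> (x, x) + A" unfolding A_def using row[OF x] sum.remove[OF fin x, of "\<lambda>b. \<pi> (x, b)"] by simp
  have nu: "\<nu> x = \<pi> (x, x) + B" unfolding B_def using col[OF x] sum.remove[OF fin x, of "\<lambda>a. \<pi> (a, x)"] by simp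
  show ?thesis unfolding cost mu nu using A0 B0 Ac Bc by (simp add: abs_le_iff)
qed

lemma W_lb:
  assumes G: "fin_conn_simple_graph V E" and ne: "couplings V \<mu> \<nu> \<noteq> {}" and x: "x \<in> V"
  shows "\<bar>\<mu> x - \<nu> x\<bar> \<le> wasserstein V E \<mu> \<nu>"
  unfolding wasserstein_def by (rule cINF_greatest[OF ne]) (rule cost_lb[OF G _ x])

lemma W_self:
  assumes G: "fin_conn_simple_graph V E" and nn: "\<forall>x\<in>V. 0 \<le> \<mu> x"
  shows "wasserstein V E \<mu> \<mu> = 0"
proof -
  have fin: "finite V" using G_facts(1)[OF G] .
  define \<pi>0 where "\<pi>0 p = (if fst p = snd p \<and> fst p \<in> V then \<mu> (fst p) else 0)" for p
  have inC: "\<pi>0 \<in> couplings V \<mu> \<mu>"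
    unfolding couplings_def
  proof (intro CollectI conjI allI impI ballI)
    fix p show "0 \<le> \<pi>0 p" unfolding \<pi>0_def using nn by auto
  next
    fix p :: "'a \<times> 'a" assume "p \<notin> V \<times> V" thus "\<pi>0 p = 0" unfolding \<pi>0_def by (cases p) auto
  next
    fix x assume "x \<in> V" thus "(\<Sum>y\<in>V. \<pi>0 (x, y)) = \<mu> x" unfolding \<pi>0_def using fin by simp
  next
    fix y assume "y \<in> V" thus "(\<Sum>x\<in>V. \<pi>0 (x, y)) = \<mu> y" unfolding \<pi>0_def using fin by simp
  qed
  have c0: "(\<Sum>p\<in>V \<times> V. \<pi>0 p * real (gdist E (fst p) (snd p))) = 0"
    by (intro sum.neutral) (auto simp: \<pi>0_def gdist_self)
  have cnn: "0 \<le> (\<Sum>p\<in>V \<times> V. \<pi> p * real (gdist E (fst p) (snd p)))" if "\<pi> \<in> couplings V \<mu> \<mu>" for \<pi>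
    using that unfolding couplings_def by (intro sum_nonneg) auto
  have bdd: "bdd_below ((\<lambda>\<pi>. \<Sum>p\<in>V \<times> V. \<pi> p * real (gdist E (fst p) (snd p))) ` couplings V \<mu> \<mu>)"
    using cnn by (intro bdd_belowI[of _ 0]) auto
  have "wasserstein V E \<mu> \<mu> \<le> 0"
    unfolding wasserstein_def using cINF_lower[OF bdd inC] c0 by simp
  moreover have "0 \<le> wasserstein V E \<mu> \<mu>"
    unfolding wasserstein_def using inC by (intro cINF_greatest cnn) auto
  ultimately show ?thesis by simp
qed

lemma prod_coupling:
  assumes fin: "finite V" and n1: "\<forall>x\<in>V. 0 \<le> \<mu> x" and n2: "\<forall>x\<in>V. 0 \<le> \<nu> x"
    and s1: "(\<Sum>x\<in>V. \<mu> x) = 1" and s2: "(\<Sum>x\<in>V. \<nu> x) = 1"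
  shows "couplings V \<mu> \<nu> \<noteq> {}"
proof -
  define \<pi> where "\<pi> p = (if fst p \<in> V \<and> snd p \<in> V then \<mu> (fst p) * \<nu> (snd p) else 0)" for p
  have "\<pi> \<in> couplings V \<mu> \<nu>"
    unfolding couplings_def
  proof (intro CollectI conjI allI impI ballI)
    fix p show "0 \<le> \<pi> p" unfolding \<pi>_def using n1 n2 by auto
  next
    fix p :: "'a \<times> 'a" assume "p \<notin> V \<times> V" thus "\<pi> p = 0" unfolding \<pi>_def by (cases p) auto
  next
    fix x assume x: "x \<in> V"
    have "(\<Sum>y\<in>V. \<pi> (x, y)) = (\<Sum>y\<in>V. \<mu> x * \<nu> y)" unfolding \<pi>_def using x by (intro sum.cong) auto
    also have "\<dots> = \<mu> x" using s2 by (simp add: sum_distrib_left[symmetric])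
    finally show "(\<Sum>y\<in>V. \<pi> (x, y)) = \<mu> x" .
  next
    fix y assume y: "y \<in> V"
    have "(\<Sum>x\<in>V. \<pi> (x, y)) = (\<Sum>x\<in>V. \<mu> x * \<nu> y)" unfolding \<pi>_def using y by (intro sum.cong) auto
    also have "\<dots> = \<nu> y" using s1 by (simp add: sum_distrib_right[symmetric])
    finally show "(\<Sum>x\<in>V. \<pi> (x, y)) = \<nu> y" .
  qed
  thus ?thesis by blast
qed




lemma isolated_case:
  assumes G: "fin_conn_simple_graph V E" and x: "x \<in> V" and d0: "deg V E x = 0"
  shows "V = {x}" "\<And>y. \<not> E x y" "\<And>y. \<not> E y x"
proof -
  have fin: "finite V" using G_facts(1)[OF G] .
  have e: "{y \<in> V. E x y} = {}" using d0 fin unfolding deg_def by simp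
  show nE: "\<And>y. \<not> E x y" using e G_facts(3)[OF G] by blast
  show "\<And>y. \<not> E y x" using nE G_facts(4)[OF G] by blast
  show "V = {x}"
  proof
    show "V \<subseteq> {x}"
    proof
      fix y assume y: "y \<in> V"
      have "(x, y) \<in> (edge_rel E)\<^sup>*" using G x y unfolding fin_conn_simple_graph_def by blast
      thus "y \<in> {x}"
      proof (cases rule: converse_rtranclE)
        case (step z) thus ?thesis using nE unfolding edge_rel_def by simp
      qed simp
    qed
  qed (use x in simp)
qed

lemma walk_iso:
  assumes G: "fin_conn_simple_graph V E" and x: "x \<in> V" and d0: "deg V E x = 0"
  shows "walk_dist V E \<gamma> x k x = \<gamma> ^ k"
proof (induction k)
  case 0 show ?case by simp
next
  case (Suc k)
  have e: "{z \<in> V. E z x} = {}" using isolated_case(3)[OF assms] by blast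
  show ?case unfolding walk_Suc step_def e sum.empty using Suc by simp
qed

theorem lemma6p5:
  fixes V :: "'a set" and E :: "'a \<Rightarrow> 'a \<Rightarrow> bool" and u v :: 'a and \<alpha> \<beta> :: real
  assumes "fin_conn_simple_graph V E"
    and "u \<in> V" and "v \<in> V"
    and "0 \<le> \<alpha>" and "\<alpha> \<le> \<beta>" and "\<beta> \<le> 1"
    and "W_seq V E u v \<alpha> \<beta> \<longlonglongrightarrow> 0"
    and "\<exists>N. \<forall>k\<ge>N. W_seq V E u v \<alpha> \<beta> k = W_seq V E u v \<alpha> \<beta> N"
  shows "\<forall>k\<ge>1. W_seq V E u v \<alpha> \<beta> k = W_seq V E u v \<alpha> \<beta> 1"
proof -
  note G = assms(1)
  have fin: "finite V" using G_facts(1)[OF G] .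
  define W where "W = W_seq V E u v \<alpha> \<beta>"
  obtain N where hN: "\<forall>k\<ge>N. W k = W N" using assms(8) unfolding W_def by blast
  have "W \<longlonglongrightarrow> W N"
  proof (rule Lim_transform_eventually[OF tendsto_const])
    show "\<forall>\<^sub>F k in sequentially. W N = W k"
      using hN unfolding eventually_sequentially by (metis)
  qed
  hence WN: "W N = 0" using LIMSEQ_unique assms(7) unfolding W_def by blast
  have W0: "\<forall>k\<ge>N. W k = 0" using hN WN by simp
  have a1: "\<alpha> \<le> 1" and b0: "0 \<le> \<beta>" using assms(4-6) by linarith+
  have nnA: "\<forall>y. 0 \<le> walk_dist V E \<alpha> w k y" for w k by (intro allI walk_nonneg[OF assms(4) a1])
  have nnB: "\<forall>y. 0 \<le> walk_dist V E \<beta> w k y" for w k by (intro allI walk_nonneg[OF b0 assms(6)])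
  show ?thesis
  proof (cases "\<exists>x\<in>V. deg V E x = 0")
    case True
    then obtain x where x: "x \<in> V" and d0: "deg V E x = 0" by blast
    have V1: "V = {x}" using isolated_case(1)[OF G x d0] .
    have ux: "u = x" and vx: "v = x" using assms(2,3) V1 by auto
    show ?thesis
    proof (cases "\<alpha> = \<beta>")
      case True
      have "W k = 0" for k
        unfolding W_def W_seq_def ux vx True by (rule W_self[OF G]) (use nnB in blast)
      thus ?thesis unfolding W_def by simp
    next
      case False
      hence ab: "\<alpha> < \<beta>" using assms(5) by simp
      have empty: "couplings V (walk_dist V E \<alpha> u k) (walk_dist V E \<beta> v k) = {}" if k: "k \<ge> 1" for k
      proof (rule ccontr)
        assume "\<not> ?thesis"
        then obtain \<pi> where pi: "\<pi> \<in> couplings V (walk_dist V E \<alpha> u k) (walk_dist V E \<beta> v k)" by blast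
        have "(\<Sum>b\<in>V. \<pi> (x, b)) = walk_dist V E \<alpha> u k x" using pi x unfolding couplings_def by blast
        hence r: "\<pi> (x, x) = \<alpha> ^ k" using walk_iso[OF G x d0] unfolding V1 ux by simp
        have "(\<Sum>a\<in>V. \<pi> (a, x)) = walk_dist V E \<beta> v k x" using pi x unfolding couplings_def by blast
        hence c: "\<pi> (x, x) = \<beta> ^ k" using walk_iso[OF G x d0] unfolding V1 vx by simp
        have "\<alpha> ^ k < \<beta> ^ k" using ab assms(4) k by (intro power_strict_mono) auto
        thus False using r c by simp
      qed
      show ?thesis
      proof (intro allI impI)
        fix k :: nat assume k: "k \<ge> 1"
        show "W_seq V E u v \<alpha> \<beta> k = W_seq V E u v \<alpha> \<beta> 1"
          unfolding W_seq_def wasserstein_def empty[OF k] empty[OF order_refl] ..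
      qed
    qed
  next
    case False
    hence dp: "\<forall>x\<in>V. deg V E x > 0" by auto
    have eqN: "walk_dist V E \<alpha> u k y = walk_dist V E \<beta> v k y" if k: "k \<ge> N" for k y
    proof (cases "y \<in> V")
      case False thus ?thesis using walk_out[OF G assms(2) False] walk_out[OF G assms(3) False] by simp
    next
      case True
      have ne: "couplings V (walk_dist V E \<alpha> u k) (walk_dist V E \<beta> v k) \<noteq> {}"
        by (rule prod_coupling[OF fin]) (use nnA nnB walk_mass[OF G dp assms(2)] walk_mass[OF G dp assms(3)] in auto)
      have "\<bar>walk_dist V E \<alpha> u k y - walk_dist V E \<beta> v k y\<bar> \<le> W k"
        unfolding W_def W_seq_def by (rule W_lb[OF G ne True])
      thus ?thesis using W0 k by simp
    qed
    interpret L: linop "Mop V E \<alpha> \<beta>" "(UNIV::bool set) \<times> V" by (rule Mop_linop[OF G])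
    define z0 where "z0 = (\<lambda>p::bool \<times> 'a. if snd p = (if fst p then u else v) then (1::real) else 0)"
    have z0s: "\<forall>p. p \<notin> (UNIV::bool set) \<times> V \<longrightarrow> z0 p = 0"
      unfolding z0_def using assms(2,3) by auto
    obtain d c where c0: "d = 0 \<or> c 0 \<noteq> 0"
      and rec: "\<forall>j. (Mop V E \<alpha> \<beta> ^^ (j+d)) (Mop V E \<alpha> \<beta> z0) =
                  (\<Sum>i<d. sc (c i) ((Mop V E \<alpha> \<beta> ^^ (i+j)) (Mop V E \<alpha> \<beta> z0)))"
      using L.krylov[OF z0s] by blast
    have Kf: "(Mop V E \<alpha> \<beta> ^^ j) (Mop V E \<alpha> \<beta> z0) =
        (\<lambda>p. walk_dist V E (if fst p then \<alpha> else \<beta>) (if fst p then u else v) (Suc j) (snd p))" for j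
    proof -
      have "(Mop V E \<alpha> \<beta> ^^ j) (Mop V E \<alpha> \<beta> z0) = (Mop V E \<alpha> \<beta> ^^ Suc j) z0"
        by (simp only: funpow_Suc_right comp_apply)
      thus ?thesis unfolding z0_def Mop_walk .
    qed
    have allk: "walk_dist V E \<alpha> u (Suc j) y = walk_dist V E \<beta> v (Suc j) y" for j y
    proof -
      define g where "g j = walk_dist V E \<alpha> u (Suc j) y - walk_dist V E \<beta> v (Suc j) y" for j
      have grec: "\<forall>j. g (j+d) = (\<Sum>i<d. c i * g (i+j))"
      proof
        fix j
        have eT: "walk_dist V E \<alpha> u (Suc (j+d)) y = (\<Sum>i<d. c i * walk_dist V E \<alpha> u (Suc (i+j)) y)"
          using fun_cong[OF rec[rule_format, of j], of "(True, y)"]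
          unfolding Kf sum_fun_apply sc_def by simp
        have eF: "walk_dist V E \<beta> v (Suc (j+d)) y = (\<Sum>i<d. c i * walk_dist V E \<beta> v (Suc (i+j)) y)"
          using fun_cong[OF rec[rule_format, of j], of "(False, y)"]
          unfolding Kf sum_fun_apply sc_def by simp
        show "g (j+d) = (\<Sum>i<d. c i * g (i+j))"
          unfolding g_def eT eF by (simp add: sum_subtractf right_diff_distrib)
      qed
      have "\<forall>j\<ge>N. g j = 0"
      proof (intro allI impI)
        fix j assume "N \<le> j"
        hence "N \<le> Suc j" by simp
        show "g j = 0" unfolding g_def eqN[OF \<open>N \<le> Suc j\<close>] by simp
      qed
      hence "g j = 0" by (rule backward[OF grec c0])
      thus ?thesis unfolding g_def by simp
    qed
    have Wk: "W k = 0" if "k \<ge> 1" for k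
    proof -
      define j where "j = k - 1"
      have kj: "k = Suc j" using that unfolding j_def by simp
      have "walk_dist V E \<beta> v k = walk_dist V E \<alpha> u k" unfolding kj using allk by auto
      hence "W k = wasserstein V E (walk_dist V E \<alpha> u k) (walk_dist V E \<alpha> u k)"
        unfolding W_def W_seq_def by simp
      also have "\<dots> = 0" by (rule W_self[OF G]) (use nnA in blast)
      finally show ?thesis .
    qed
    show ?thesis using Wk unfolding W_def by simp
  qed
qed


end
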